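(* Let $X$ be a non-degenerate commutative Banach algebra and $a\in X$. Suppose there is a derivation $M$ on $X$ with $Ma\neq0$. Then $cI+M_a$ is not supercyclic for every $c\in\mathbb{K}$. If additionally there exists $R\in L(X)$ with dense range, commuting with $M_a$, and with $R(X)\subseteq Y$ for some Banach space $Y\in\mathcal{Y}$ embedded into $X$, then $cI+M_a$ is not weakly supercyclic for every $c\in\mathbb{K}$.
   Context: Banach algebras need not be unital; $M_ab=ab$; $X$ is non-degenerate if $M_a=0$ implies $a=0$. A derivation on $X$ is $M\in L(X)$ with $M(ab)=(Ma)b+a(Mb)$ for all $a,b$. $T$ is supercyclic (resp. weakly supercyclic) if for some $x$ the set $\{zT^nx:z\in\mathbb{K},n\in\mathbb{Z}_+\}$ is norm (resp. weakly) dense. A Banach space $Y$ embedded into $X$ is a linear subspace of $X$ with its own complete norm inducing a topology stronger than the inherited one. $\mathcal{Y}$ is the class of Banach spaces $X$ such that for every sequence $(x_n)$ in $X$ with $n=O(\|x_n\|)$ as $n\to\infty$, the set $\{x_n:n\in\mathbb{Z}_+\}$ is weakly closed. *)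

theory Defs
  imports "HOL-Analysis.Analysis" "HOL-Library.Landau_Symbols"
begin

text \<open>Scalar field K: real (cplx = False) or complex (cplx = True).
  A complex structure on a real Banach algebra is encoded by an operator J
  (multiplication by i); complex scalar z acts as Re z *R x + Im z *R J x.\<close>

definition scal :: "('a::real_vector \<Rightarrow> 'a) \<Rightarrow> complex \<Rightarrow> 'a \<Rightarrow> 'a" where
  "scal J z x = Re z *\<^sub>R x + Im z *\<^sub>R J x"

definition scalars :: "bool \<Rightarrow> complex set" where
  "scalars cplx = (if cplx then UNIV else \<real>)"

definition scalar_structure ::
  "bool \<Rightarrow> ('a::{real_normed_algebra, comm_ring} \<Rightarrow> 'a) \<Rightarrow> bool" where
  "scalar_structure cplx J =
    (if cplx then
       bounded_linear J \<and> (\<forall>x. J (J x) = - x) \<and> (\<forall>x y. J (x * y) = J x * y)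
       \<and> (\<forall>z x. norm (scal J z x) = cmod z * norm x)
     else J = (\<lambda>x. 0))"

definition lin_op :: "bool \<Rightarrow> ('a::real_normed_vector \<Rightarrow> 'a) \<Rightarrow> ('a \<Rightarrow> 'a) \<Rightarrow> bool" where
  "lin_op cplx J T = (bounded_linear T \<and>
     (\<forall>z\<in>scalars cplx. \<forall>x. T (scal J z x) = scal J z (T x)))"

definition non_degenerate :: "'a::{real_normed_algebra, comm_ring} itself \<Rightarrow> bool" where
  "non_degenerate _ = (\<forall>a::'a. (\<forall>b. a * b = 0) \<longrightarrow> a = 0)"

definition derivation ::
  "bool \<Rightarrow> ('a::{real_normed_algebra, comm_ring} \<Rightarrow> 'a) \<Rightarrow> ('a \<Rightarrow> 'a) \<Rightarrow> bool" where
  "derivation cplx J M = (lin_op cplx J M \<and> (\<forall>a b. M (a * b) = M a * b + a * M b))"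

definition orbit_cone ::
  "bool \<Rightarrow> ('a::real_vector \<Rightarrow> 'a) \<Rightarrow> ('a \<Rightarrow> 'a) \<Rightarrow> 'a \<Rightarrow> 'a set" where
  "orbit_cone cplx J T x = {scal J z ((T ^^ n) x) | z n. z \<in> scalars cplx}"

definition supercyclic ::
  "bool \<Rightarrow> ('a::real_normed_vector \<Rightarrow> 'a) \<Rightarrow> ('a \<Rightarrow> 'a) \<Rightarrow> bool" where
  "supercyclic cplx J T = (\<exists>x. closure (orbit_cone cplx J T x) = UNIV)"

text \<open>Weak density: every basic weak neighbourhood of every point meets S.
  Real-valued bounded real-linear functionals generate the weak topology
  (also in the complex case, via real parts).\<close>
definition weakly_dense :: "'a::real_normed_vector set \<Rightarrow> bool" where
  "weakly_dense S = (\<forall>x. \<forall>F::('a \<Rightarrow> real) set. \<forall>e>0.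
      finite F \<and> (\<forall>f\<in>F. bounded_linear f) \<longrightarrow>
      (\<exists>s\<in>S. \<forall>f\<in>F. \<bar>f s - f x\<bar> < e))"

definition weakly_supercyclic ::
  "bool \<Rightarrow> ('a::real_normed_vector \<Rightarrow> 'a) \<Rightarrow> ('a \<Rightarrow> 'a) \<Rightarrow> bool" where
  "weakly_supercyclic cplx J T = (\<exists>x. weakly_dense (orbit_cone cplx J T x))"

definition embedded_banach ::
  "bool \<Rightarrow> ('a::real_normed_vector \<Rightarrow> 'a) \<Rightarrow> 'a set \<Rightarrow> ('a \<Rightarrow> real) \<Rightarrow> bool" where
  "embedded_banach cplx J Y nY =
    (0 \<in> Y \<and> (\<forall>x\<in>Y. \<forall>y\<in>Y. x + y \<in> Y) \<and> (\<forall>z\<in>scalars cplx. \<forall>y\<in>Y. scal J z y \<in> Y)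
     \<and> (\<forall>y\<in>Y. 0 \<le> nY y \<and> (nY y = 0 \<longleftrightarrow> y = 0))
     \<and> (\<forall>x\<in>Y. \<forall>y\<in>Y. nY (x + y) \<le> nY x + nY y)
     \<and> (\<forall>z\<in>scalars cplx. \<forall>y\<in>Y. nY (scal J z y) = cmod z * nY y)
     \<and> (\<forall>s::nat \<Rightarrow> 'a. (\<forall>n. s n \<in> Y) \<and>
           (\<forall>e>0. \<exists>N. \<forall>m\<ge>N. \<forall>n\<ge>N. nY (s m - s n) < e) \<longrightarrow>
           (\<exists>y\<in>Y. \<forall>e>0. \<exists>N. \<forall>n\<ge>N. nY (s n - y) < e))
     \<and> (\<forall>y\<in>Y. \<forall>e>0. \<exists>d>0. \<forall>y'\<in>Y. nY (y' - y) < d \<longrightarrow> norm (y' - y) < e))"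

definition Y_functional :: "'a::real_vector set \<Rightarrow> ('a \<Rightarrow> real) \<Rightarrow> ('a \<Rightarrow> real) \<Rightarrow> bool" where
  "Y_functional Y nY f = ((\<forall>x\<in>Y. \<forall>y\<in>Y. f (x + y) = f x + f y)
     \<and> (\<forall>r. \<forall>y\<in>Y. f (r *\<^sub>R y) = r * f y)
     \<and> (\<exists>K. \<forall>y\<in>Y. \<bar>f y\<bar> \<le> K * nY y))"

definition weakly_closed_in :: "'a::real_vector set \<Rightarrow> ('a \<Rightarrow> real) \<Rightarrow> 'a set \<Rightarrow> bool" where
  "weakly_closed_in Y nY S = (S \<subseteq> Y \<and>
     (\<forall>y\<in>Y - S. \<exists>F e. finite F \<and> (\<forall>f\<in>F. Y_functional Y nY f) \<and> e > 0 \<and>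
        (\<forall>y'\<in>Y. (\<forall>f\<in>F. \<bar>f y' - f y\<bar> < e) \<longrightarrow> y' \<notin> S)))"

definition in_class_Y :: "'a::real_vector set \<Rightarrow> ('a \<Rightarrow> real) \<Rightarrow> bool" where
  "in_class_Y Y nY = (\<forall>xs::nat \<Rightarrow> 'a. (\<forall>n. xs n \<in> Y) \<and>
      (\<lambda>n. real n) \<in> O(\<lambda>n. nY (xs n)) \<longrightarrow> weakly_closed_in Y nY (range xs))"

end

theory Submission
  imports Defs
begin

definition good_graph :: "('a::real_vector \<Rightarrow> real) \<Rightarrow> ('a \<times> real) set \<Rightarrow> bool" where
  "good_graph p G \<longleftrightarrow> (\<forall>u a b. (u,a)\<in>G \<longrightarrow> (u,b)\<in>G \<longrightarrow> a = b)
     \<and> (\<forall>u a v b. (u,a)\<in>G \<longrightarrow> (v,b)\<in>G \<longrightarrow> (u+v, a+b)\<in>G)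
     \<and> (\<forall>u a r. (u,a)\<in>G \<longrightarrow> (r *\<^sub>R u, r*a)\<in>G)
     \<and> (\<forall>u a. (u,a)\<in>G \<longrightarrow> a \<le> p u)"

lemma HB_graph:
  fixes p :: "'a::real_vector \<Rightarrow> real" and G0 :: "('a\<times>real) set"
  assumes sub: "\<And>u v. p (u+v) \<le> p u + p v"
    and hom: "\<And>r u. r > 0 \<Longrightarrow> p (r *\<^sub>R u) = r * p u"
    and G0: "good_graph p G0" and ne: "G0 \<noteq> {}"
  shows "\<exists>f. (\<forall>u v. f (u+v) = f u + f v) \<and> (\<forall>r u. f (r *\<^sub>R u) = r * f u)
           \<and> (\<forall>u. f u \<le> p u) \<and> (\<forall>u a. (u,a)\<in>G0 \<longrightarrow> f u = a)"
proof -
  define A where "A = {G. good_graph p G \<and> G0 \<subseteq> G}"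
  have "\<exists>Gm\<in>A. \<forall>X\<in>A. Gm \<subseteq> X \<longrightarrow> X = Gm"
  proof (rule subset_Zorn_nonempty)
    show "A \<noteq> {}" using G0 unfolding A_def by blast
  next
    fix C assume Cne: "C \<noteq> {}" and ch: "subset.chain A C"
    have CA: "C \<subseteq> A" and lin: "\<And>X Y. X\<in>C \<Longrightarrow> Y\<in>C \<Longrightarrow> X \<subseteq> Y \<or> Y \<subseteq> X"
      using ch unfolding subset.chain_def by auto
    have gg: "\<And>X. X \<in> C \<Longrightarrow> good_graph p X" using CA unfolding A_def by auto
    note ggd = gg[unfolded good_graph_def]
    have two: "\<exists>Z\<in>C. P \<in> Z \<and> Q \<in> Z" if PQ: "P \<in> \<Union>C" "Q \<in> \<Union>C" for P Q
    proof -
      obtain X Y where "X\<in>C" "Y\<in>C" "P\<in>X" "Q\<in>Y" using PQ by auto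
      then show ?thesis using lin[of X Y] by blast
    qed
    have "good_graph p (\<Union>C)"
      unfolding good_graph_def
    proof (intro conjI allI impI)
      fix u a b assume "(u,a)\<in>\<Union>C" "(u,b)\<in>\<Union>C"
      then obtain Z where "Z\<in>C" "(u,a)\<in>Z" "(u,b)\<in>Z" using two by blast
      then show "a = b" using ggd[of Z] by metis
    next
      fix u a v b assume "(u,a)\<in>\<Union>C" "(v,b)\<in>\<Union>C"
      then obtain Z where "Z\<in>C" "(u,a)\<in>Z" "(v,b)\<in>Z" using two by blast
      then have "(u+v,a+b)\<in>Z" using ggd[of Z] by metis
      then show "(u+v,a+b)\<in>\<Union>C" using \<open>Z\<in>C\<close> by blast
    next
      fix u a r assume "(u,a)\<in>\<Union>C"
      then obtain Z where "Z\<in>C" "(u,a)\<in>Z" by blast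
      then have "(r *\<^sub>R u, r*a)\<in>Z" using ggd[of Z] by metis
      then show "(r *\<^sub>R u, r*a)\<in>\<Union>C" using \<open>Z\<in>C\<close> by blast
    next
      fix u a assume "(u,a)\<in>\<Union>C"
      then obtain Z where "Z\<in>C" "(u,a)\<in>Z" by blast
      then show "a \<le> p u" using ggd[of Z] by metis
    qed
    moreover have "G0 \<subseteq> \<Union>C" using Cne CA unfolding A_def by auto
    ultimately show "\<Union>C \<in> A" unfolding A_def by blast
  qed
  then obtain Gm where GmA: "Gm \<in> A" and max: "\<And>X. X\<in>A \<Longrightarrow> Gm \<subseteq> X \<Longrightarrow> X = Gm" by blast
  have gm: "good_graph p Gm" and G0Gm: "G0 \<subseteq> Gm" using GmA unfolding A_def by auto
  have fnc: "\<And>u a b. (u,a)\<in>Gm \<Longrightarrow> (u,b)\<in>Gm \<Longrightarrow> a = b"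
    and add: "\<And>u a v b. (u,a)\<in>Gm \<Longrightarrow> (v,b)\<in>Gm \<Longrightarrow> (u+v,a+b)\<in>Gm"
    and scl: "\<And>u a r. (u,a)\<in>Gm \<Longrightarrow> (r *\<^sub>R u, r*a)\<in>Gm"
    and dom: "\<And>u a. (u,a)\<in>Gm \<Longrightarrow> a \<le> p u"
    using gm unfolding good_graph_def by metis+
  have zero: "(0,0) \<in> Gm"
  proof -
    obtain u a where "(u,a)\<in>G0" using ne by auto
    then have "(u,a)\<in>Gm" using G0Gm by blast
    then have "(0 *\<^sub>R u, 0*a)\<in>Gm" by (rule scl)
    then show ?thesis by simp
  qed
  have total: "\<exists>a. (z,a)\<in>Gm" for z
  proof (rule ccontr)
    assume nz: "\<nexists>a. (z,a)\<in>Gm"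
    define c where "c = Sup {a - p (v - z) | v a. (v,a)\<in>Gm}"
    have bdd: "a - p (v - z) \<le> p (w + z) - b" if "(v,a)\<in>Gm" "(w,b)\<in>Gm" for v a w b
    proof -
      have "a + b \<le> p (v + w)" using dom[OF add[OF that]] .
      also have "p (v + w) = p ((v - z) + (w + z))" by (simp add: algebra_simps)
      also have "\<dots> \<le> p (v - z) + p (w + z)" by (rule sub)
      finally show ?thesis by simp
    qed
    have c_ge: "a - p (v - z) \<le> c" if "(v,a)\<in>Gm" for v a
      unfolding c_def
    proof (rule cSup_upper)
      show "a - p (v - z) \<in> {a - p (v - z) | v a. (v,a)\<in>Gm}" using that by blast
      show "bdd_above {a - p (v - z) | v a. (v,a)\<in>Gm}"
        using bdd zero by (auto intro!: bdd_aboveI[where M="p (0 + z) - 0"])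
    qed
    have c_le: "c \<le> p (w + z) - b" if "(w,b)\<in>Gm" for w b
      unfolding c_def
    proof (rule cSup_least)
      show "{a - p (v - z) | v a. (v,a)\<in>Gm} \<noteq> {}" using zero by blast
      show "\<And>x. x \<in> {a - p (v - z) | v a. (v,a)\<in>Gm} \<Longrightarrow> x \<le> p (w + z) - b"
        using bdd that by blast
    qed
    define G' where "G' = {(v + t *\<^sub>R z, a + t * c) | v a t. (v,a)\<in>Gm}"
    have inD: "False" if "(v,a)\<in>Gm" "(v',a')\<in>Gm" "v + t *\<^sub>R z = v' + t' *\<^sub>R z" "t \<noteq> t'"
      for v a v' a' t t'
    proof -
      have "(v' + (-1) *\<^sub>R v, a' + (-1)*a) \<in> Gm" using add[OF that(2) scl[OF that(1)]] .
      then have "((1/(t-t')) *\<^sub>R (v' + (-1) *\<^sub>R v), (1/(t-t')) * (a' + (-1)*a)) \<in> Gm" by (rule scl)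
      moreover have "(1/(t-t')) *\<^sub>R (v' + (-1) *\<^sub>R v) = z"
      proof -
        have "v' - v = (t - t') *\<^sub>R z" using that(3) by (simp add: algebra_simps)
        moreover have "v' + (-1) *\<^sub>R v = v' - v" by simp
        ultimately have "(1/(t-t')) *\<^sub>R (v' + (-1) *\<^sub>R v) = (1/(t-t')) *\<^sub>R ((t - t') *\<^sub>R z)" by simp
        also have "\<dots> = z" using that(4) by simp
        finally show ?thesis .
      qed
      ultimately show False using nz by auto
    qed
    have "good_graph p G'" unfolding good_graph_def
    proof (intro conjI allI impI)
      fix u a1 b1 assume "(u,a1)\<in>G'" "(u,b1)\<in>G'"
      then obtain v a t v' a' t' where h: "u = v + t *\<^sub>R z" "a1 = a + t*c" "(v,a)\<in>Gm"
        "u = v' + t' *\<^sub>R z" "b1 = a' + t'*c" "(v',a')\<in>Gm" unfolding G'_def by blast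
      then have "t = t'" using inD[of v a v' a' t t'] by auto
      then have "v = v'" using h by simp
      then show "a1 = b1" using h \<open>t = t'\<close> fnc by blast
    next
      fix u a1 w b1 assume "(u,a1)\<in>G'" "(w,b1)\<in>G'"
      then obtain v a t v' a' t' where h: "u = v + t *\<^sub>R z" "a1 = a + t*c" "(v,a)\<in>Gm"
        "w = v' + t' *\<^sub>R z" "b1 = a' + t'*c" "(v',a')\<in>Gm" unfolding G'_def by blast
      have "(v+v', a+a')\<in>Gm" using add[OF h(3) h(6)] .
      moreover have "u + w = (v+v') + (t+t') *\<^sub>R z" "a1 + b1 = (a+a') + (t+t')*c"
        using h by (simp_all add: algebra_simps)
      ultimately show "(u+w, a1+b1)\<in>G'" unfolding G'_def by blast
    next
      fix u a1 r assume "(u,a1)\<in>G'"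
      then obtain v a t where h: "u = v + t *\<^sub>R z" "a1 = a + t*c" "(v,a)\<in>Gm" unfolding G'_def by blast
      have "(r *\<^sub>R v, r*a)\<in>Gm" using scl[OF h(3)] .
      moreover have "r *\<^sub>R u = r *\<^sub>R v + (r*t) *\<^sub>R z" "r*a1 = r*a + (r*t)*c"
        using h by (simp_all add: algebra_simps)
      ultimately show "(r *\<^sub>R u, r*a1)\<in>G'" unfolding G'_def by blast
    next
      fix u a1 assume "(u,a1)\<in>G'"
      then obtain v a t where h: "u = v + t *\<^sub>R z" "a1 = a + t*c" "(v,a)\<in>Gm" unfolding G'_def by blast
      consider "t = 0" | "t > 0" | "t < 0" by linarith
      then show "a1 \<le> p u"
      proof cases
        case 1 then show ?thesis using h dom by simp
      next
        case 2
        have "((1/t) *\<^sub>R v, (1/t)*a)\<in>Gm" using scl[OF h(3)] .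
        then have "c \<le> p ((1/t) *\<^sub>R v + z) - (1/t)*a" using c_le by blast
        then have "t * c \<le> t * (p ((1/t) *\<^sub>R v + z) - (1/t)*a)" using 2 by simp
        also have "\<dots> = t * p ((1/t) *\<^sub>R v + z) - a" using 2 by (simp add: algebra_simps)
        also have "t * p ((1/t) *\<^sub>R v + z) = p (t *\<^sub>R ((1/t) *\<^sub>R v + z))" using hom[OF 2] by simp
        also have "t *\<^sub>R ((1/t) *\<^sub>R v + z) = u" using 2 h by (simp add: algebra_simps)
        finally show ?thesis using h by simp
      next
        case 3
        define s where "s = -t"
        have s: "s > 0" using 3 s_def by simp
        have "((1/s) *\<^sub>R v, (1/s)*a)\<in>Gm" using scl[OF h(3)] .
        then have "(1/s)*a - p ((1/s) *\<^sub>R v - z) \<le> c" using c_ge by blast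
        then have "s * ((1/s)*a - p ((1/s) *\<^sub>R v - z)) \<le> s * c" using s by (simp add: mult_left_mono)
        then have "a - s * p ((1/s) *\<^sub>R v - z) \<le> s * c" using s by (simp add: algebra_simps)
        then have "a - p (s *\<^sub>R ((1/s) *\<^sub>R v - z)) \<le> s * c" using hom[OF s] by simp
        moreover have "s *\<^sub>R ((1/s) *\<^sub>R v - z) = u" using s h s_def by (simp add: algebra_simps)
        ultimately show ?thesis using h s_def by simp
      qed
    qed
    moreover have "G0 \<subseteq> G'"
    proof
      fix P assume "P \<in> G0"
      then obtain v a where "P = (v,a)" "(v,a)\<in>Gm" using G0Gm by (cases P) auto
      moreover have "P = (v + 0 *\<^sub>R z, a + 0 * c)" using \<open>P = (v,a)\<close> by simp
      ultimately show "P \<in> G'" unfolding G'_def by blast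
    qed
    ultimately have "G' \<in> A" unfolding A_def by blast
    moreover have "Gm \<subseteq> G'"
    proof
      fix P assume "P \<in> Gm"
      then obtain v a where "P = (v,a)" "(v,a)\<in>Gm" by (cases P) auto
      moreover have "P = (v + 0 *\<^sub>R z, a + 0 * c)" using \<open>P = (v,a)\<close> by simp
      ultimately show "P \<in> G'" unfolding G'_def by blast
    qed
    ultimately have "G' = Gm" using max by blast
    moreover have "(z, c) \<in> G'"
    proof -
      have "(z, c) = (0 + 1 *\<^sub>R z, 0 + 1 * c)" by simp
      then show ?thesis unfolding G'_def using zero by blast
    qed
    ultimately show False using nz by blast
  qed
  define f where "f u = (THE a. (u,a)\<in>Gm)" for u
  have fG: "(u, f u)\<in>Gm" for u
  proof -
    obtain a where a: "(u,a)\<in>Gm" using total by blast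
    have "(THE a. (u,a)\<in>Gm) = a" using a fnc by blast
    then show ?thesis using a unfolding f_def by simp
  qed
  have feq: "f u = a" if "(u,a)\<in>Gm" for u a using fG that fnc by blast
  show ?thesis
  proof (intro exI[of _ f] conjI allI impI)
    show "f (u+v) = f u + f v" for u v using feq[OF add[OF fG fG]] .
    show "f (r *\<^sub>R u) = r * f u" for r u using feq[OF scl[OF fG]] .
    show "f u \<le> p u" for u using dom[OF fG] .
    show "(u,a)\<in>G0 \<Longrightarrow> f u = a" for u a using feq G0Gm by blast
  qed
qed


lemma infdist_sub:
  fixes V :: "'a::real_normed_vector set"
  assumes V: "subspace V"
  shows "infdist (u+v) V \<le> infdist u V + infdist v V"
proof -
  have ne: "V \<noteq> {}" using V subspace_0 by blast
  have "infdist (u+v) V - dist v a2 \<le> infdist u V" if a2: "a2 \<in> V" for a2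
  proof -
    have "infdist (u+v) V - dist v a2 \<le> dist u a1" if a1: "a1 \<in> V" for a1
    proof -
      have "a1 + a2 \<in> V" using V a1 a2 subspace_add by blast
      then have "infdist (u+v) V \<le> dist (u+v) (a1+a2)" by (rule infdist_le)
      also have "\<dots> \<le> dist u a1 + dist v a2"
        unfolding dist_norm
        using norm_triangle_ineq[of "u - a1" "v - a2"] by (simp add: algebra_simps)
      finally show ?thesis by simp
    qed
    then show ?thesis unfolding infdist_notempty[OF ne] by (intro cINF_greatest[OF ne])
  qed
  then have "infdist (u+v) V - infdist u V \<le> dist v a2" if "a2 \<in> V" for a2
    using that by force
  then have "infdist (u+v) V - infdist u V \<le> infdist v V"
    unfolding infdist_notempty[OF ne] by (intro cINF_greatest[OF ne])
  then show ?thesis by simp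
qed

lemma infdist_scale_le:
  fixes V :: "'a::real_normed_vector set"
  assumes V: "subspace V" and r: "r > 0"
  shows "infdist (r *\<^sub>R u) V \<le> r * infdist u V"
proof -
  have ne: "V \<noteq> {}" using V subspace_0 by blast
  have "infdist (r *\<^sub>R u) V / r \<le> dist u a" if a: "a \<in> V" for a
  proof -
    have "r *\<^sub>R a \<in> V" using V a subspace_scale by blast
    then have "infdist (r *\<^sub>R u) V \<le> dist (r *\<^sub>R u) (r *\<^sub>R a)" by (rule infdist_le)
    also have "\<dots> = r * dist u a" using r
      by (simp add: dist_norm scaleR_diff_right[symmetric])
    finally show ?thesis using r by (simp add: divide_simps mult.commute)
  qed
  then have "infdist (r *\<^sub>R u) V / r \<le> infdist u V"
    unfolding infdist_notempty[OF ne] by (intro cINF_greatest[OF ne])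
  then show ?thesis using r by (simp add: divide_simps mult.commute)
qed

lemma infdist_scale:
  fixes V :: "'a::real_normed_vector set"
  assumes V: "subspace V" and r: "r > 0"
  shows "infdist (r *\<^sub>R u) V = r * infdist u V"
proof -
  have "infdist u V = infdist ((1/r) *\<^sub>R (r *\<^sub>R u)) V" using r by simp
  also have "\<dots> \<le> (1/r) * infdist (r *\<^sub>R u) V" using infdist_scale_le[OF V, of "1/r" "r *\<^sub>R u"] r by simp
  finally have "r * infdist u V \<le> infdist (r *\<^sub>R u) V" using r by (simp add: field_simps)
  then show ?thesis using infdist_scale_le[OF V r, of u] by linarith
qed

lemma separation:
  fixes V :: "'a::real_normed_vector set"
  assumes V: "subspace V" and cl: "closed V" and y: "y \<notin> V"
  shows "\<exists>f::'a\<Rightarrow>real. bounded_linear f \<and> (\<forall>v\<in>V. f v = 0) \<and> f y \<noteq> 0"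
proof -
  have ne: "V \<noteq> {}" using V subspace_0 by blast
  define p where "p u = infdist u V" for u
  define d where "d = infdist y V"
  have d: "d > 0" unfolding d_def using infdist_pos_not_in_closed[OF cl ne y] .
  define G0 where "G0 = {(v + t *\<^sub>R y, t * d) | v t. v \<in> V}"
  have tt: "t = t'" if "v\<in>V" "v'\<in>V" "v + t *\<^sub>R y = v' + t' *\<^sub>R y" for v v' t t'
  proof (rule ccontr)
    assume "t \<noteq> t'"
    have "v' - v = (t - t') *\<^sub>R y" using that(3) by (simp add: algebra_simps)
    then have "(1/(t-t')) *\<^sub>R (v' - v) = y" using \<open>t \<noteq> t'\<close> by simp
    moreover have "(1/(t-t')) *\<^sub>R (v' - v) \<in> V"
      using V that(1,2) subspace_diff subspace_scale by blast
    ultimately show False using y by simp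
  qed
  have dom: "t * d \<le> p (v + t *\<^sub>R y)" if v: "v \<in> V" for v t
  proof (cases "t > 0")
    case True
    have "v + t *\<^sub>R y = t *\<^sub>R ((1/t) *\<^sub>R v + y)" using True by (simp add: algebra_simps)
    then have "p (v + t *\<^sub>R y) = t * infdist ((1/t) *\<^sub>R v + y) V"
      unfolding p_def using infdist_scale[OF V True] by simp
    moreover have "infdist y V \<le> infdist ((1/t) *\<^sub>R v + y) V"
    proof -
      have "-((1/t) *\<^sub>R v) \<in> V" using V v subspace_neg subspace_scale by blast
      then have "infdist (-((1/t) *\<^sub>R v)) V = 0" by simp
      moreover have "infdist (((1/t) *\<^sub>R v + y) + -((1/t) *\<^sub>R v)) V \<le>
          infdist ((1/t) *\<^sub>R v + y) V + infdist (-((1/t) *\<^sub>R v)) V"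
        by (rule infdist_sub[OF V])
      ultimately show ?thesis by simp
    qed
    ultimately show ?thesis unfolding d_def using True by simp
  next
    case False
    then have "t * d \<le> 0" using d by (simp add: mult_nonpos_nonneg)
    then show ?thesis unfolding p_def using infdist_nonneg order_trans by blast
  qed
  have gg: "good_graph p G0" unfolding good_graph_def
  proof (intro conjI allI impI)
    fix u a b assume "(u,a)\<in>G0" "(u,b)\<in>G0"
    then obtain v t v' t' where "u = v + t *\<^sub>R y" "a = t * d" "v\<in>V" "u = v' + t' *\<^sub>R y" "b = t' * d" "v'\<in>V"
      unfolding G0_def by blast
    then show "a = b" using tt by metis
  next
    fix u a w b assume "(u,a)\<in>G0" "(w,b)\<in>G0"
    then obtain v t v' t' where h: "u = v + t *\<^sub>R y" "a = t * d" "v\<in>V" "w = v' + t' *\<^sub>R y" "b = t' * d" "v'\<in>V"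
      unfolding G0_def by blast
    have "v + v' \<in> V" using V h subspace_add by blast
    moreover have "u + w = (v + v') + (t + t') *\<^sub>R y" "a + b = (t+t') * d" using h by (simp_all add: algebra_simps)
    ultimately show "(u+w, a+b)\<in>G0" unfolding G0_def by blast
  next
    fix u a r assume "(u,a)\<in>G0"
    then obtain v t where h: "u = v + t *\<^sub>R y" "a = t * d" "v\<in>V" unfolding G0_def by blast
    have "r *\<^sub>R v \<in> V" using V h subspace_scale by blast
    moreover have "r *\<^sub>R u = r *\<^sub>R v + (r*t) *\<^sub>R y" "r * a = (r*t) * d" using h by (simp_all add: algebra_simps)
    ultimately show "(r *\<^sub>R u, r*a)\<in>G0" unfolding G0_def by blast
  next
    fix u a assume "(u,a)\<in>G0"
    then obtain v t where h: "u = v + t *\<^sub>R y" "a = t * d" "v\<in>V" unfolding G0_def by blast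
    then show "a \<le> p u" using dom by blast
  qed
  have "(0 + 0 *\<^sub>R y, 0 * d) \<in> G0" unfolding G0_def using V subspace_0 by blast
  then have neG: "G0 \<noteq> {}" by blast
  have psub: "p (u+v) \<le> p u + p v" for u v unfolding p_def by (rule infdist_sub[OF V])
  have phom: "p (r *\<^sub>R u) = r * p u" if "r > 0" for r u unfolding p_def by (rule infdist_scale[OF V that])
  obtain f where fadd: "\<And>u v. f (u+v) = f u + f v" and fscl: "\<And>r u. f (r *\<^sub>R u) = r * f u"
    and fp: "\<And>u. f u \<le> p u" and fG: "\<And>u a. (u,a)\<in>G0 \<Longrightarrow> f u = a"
    using HB_graph[OF psub phom gg neG] by blast
  have pn: "p u \<le> norm u" for u
  proof -
    have "p u \<le> dist u 0" unfolding p_def using V subspace_0 infdist_le by blast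
    then show ?thesis by simp
  qed
  have "bounded_linear f"
  proof (rule bounded_linear_intro[where K=1])
    show "f (x + y) = f x + f y" for x y by (rule fadd)
    show "f (r *\<^sub>R x) = r *\<^sub>R f x" for r x using fscl by simp
    show "norm (f x) \<le> norm x * 1" for x
    proof -
      have "f x \<le> norm x" using fp pn order_trans by blast
      moreover have "- f x \<le> norm x"
      proof -
        have "f ((-1) *\<^sub>R x) \<le> norm ((-1) *\<^sub>R x)" using fp pn order_trans by blast
        then show ?thesis using fscl[of "-1" x] by simp
      qed
      ultimately show ?thesis by simp
    qed
  qed
  moreover have "f v = 0" if "v \<in> V" for v
  proof -
    have "(v + 0 *\<^sub>R y, 0 * d) \<in> G0" unfolding G0_def using that by blast
    then show ?thesis using fG by simp
  qed
  moreover have "f y = d"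
  proof -
    have "(0 + 1 *\<^sub>R y, 1 * d) \<in> G0" unfolding G0_def using V subspace_0 by blast
    then show ?thesis using fG by simp
  qed
  ultimately have "bounded_linear f \<and> (\<forall>v\<in>V. f v = 0) \<and> f y \<noteq> 0" using d by auto
  then show ?thesis by blast
qed


lemma wd_two:
  fixes C :: "'a::real_normed_vector set"
  assumes wd: "weakly_dense C" and CV: "C \<subseteq> V1 \<union> V2"
    and V1: "subspace V1" "closed V1" and V2: "subspace V2" "closed V2"
  shows "V1 = UNIV \<or> V2 = UNIV"
proof (rule ccontr)
  assume "\<not> (V1 = UNIV \<or> V2 = UNIV)"
  then obtain p q where p: "p \<notin> V1" and q: "q \<notin> V2" by blast
  have "\<exists>y. y \<notin> V1 \<and> y \<notin> V2"
  proof (cases "p \<in> V2")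
    case False then show ?thesis using p by blast
  next
    case pV2: True
    show ?thesis
    proof (cases "q \<in> V1")
      case False then show ?thesis using q by blast
    next
      case qV1: True
      have "p + q \<notin> V1"
      proof
        assume "p + q \<in> V1"
        then have "(p + q) - q \<in> V1" using qV1 V1(1) subspace_diff by blast
        then show False using p by simp
      qed
      moreover have "p + q \<notin> V2"
      proof
        assume "p + q \<in> V2"
        then have "(p + q) - p \<in> V2" using pV2 V2(1) subspace_diff by blast
        then show False using q by simp
      qed
      ultimately show ?thesis by blast
    qed
  qed
  then obtain y where y1: "y \<notin> V1" and y2: "y \<notin> V2" by blast
  obtain f1 :: "'a \<Rightarrow> real" where f1: "bounded_linear f1" "\<And>v. v\<in>V1 \<Longrightarrow> f1 v = 0" "f1 y \<noteq> 0"
    using separation[OF V1 y1] by blast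
  obtain f2 :: "'a \<Rightarrow> real" where f2: "bounded_linear f2" "\<And>v. v\<in>V2 \<Longrightarrow> f2 v = 0" "f2 y \<noteq> 0"
    using separation[OF V2 y2] by blast
  define e where "e = min \<bar>f1 y\<bar> \<bar>f2 y\<bar>"
  have e: "e > 0" unfolding e_def using f1(3) f2(3) by simp
  have Ff: "finite {f1,f2} \<and> (\<forall>f\<in>{f1,f2}. bounded_linear f)" using f1(1) f2(1) by simp
  have "\<exists>s\<in>C. \<forall>f\<in>{f1,f2}. \<bar>f s - f y\<bar> < e"
    using wd e Ff unfolding weakly_dense_def by blast
  then obtain s where s: "s \<in> C" "\<And>f. f \<in> {f1,f2} \<Longrightarrow> \<bar>f s - f y\<bar> < e" by blast
  have "s \<in> V1 \<or> s \<in> V2" using s(1) CV by blast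
  then show False
  proof
    assume "s \<in> V1"
    then have "\<bar>0 - f1 y\<bar> < e" using s(2)[of f1] f1(2) by simp
    then show False unfolding e_def by simp
  next
    assume "s \<in> V2"
    then have "\<bar>0 - f2 y\<bar> < e" using s(2)[of f2] f2(2) by simp
    then show False unfolding e_def by simp
  qed
qed

lemma wd_one:
  fixes C :: "'a::real_normed_vector set"
  assumes wd: "weakly_dense C" and CV: "C \<subseteq> V" and V: "subspace V" "closed V"
  shows "V = UNIV"
  using wd_two[OF wd _ V V] CV by blast

lemma finite_bl_bound:
  assumes "finite F" "\<forall>f\<in>F. bounded_linear (f :: 'a::real_normed_vector \<Rightarrow> real)"
  shows "\<exists>K>0. \<forall>f\<in>F. \<forall>u. \<bar>f u\<bar> \<le> norm u * K"
  using assms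
proof (induction F rule: finite_induct)
  case empty then show ?case by (intro exI[of _ 1]) auto
next
  case (insert g F)
  then obtain K where K: "K > 0" "\<forall>f\<in>F. \<forall>u. \<bar>f u\<bar> \<le> norm u * K" by auto
  obtain K' where K': "K' > 0" "\<forall>u. norm (g u) \<le> norm u * K'"
    using insert(4) bounded_linear.pos_bounded by blast
  have "\<forall>f\<in>insert g F. \<forall>u. \<bar>f u\<bar> \<le> norm u * max K K'"
  proof (intro ballI allI)
    fix f u assume "f \<in> insert g F"
    then have "\<bar>f u\<bar> \<le> norm u * K \<or> \<bar>f u\<bar> \<le> norm u * K'" using K K' by auto
    moreover have "norm u * K \<le> norm u * max K K'" "norm u * K' \<le> norm u * max K K'"
      by (simp_all add: mult_left_mono)
    ultimately show "\<bar>f u\<bar> \<le> norm u * max K K'" by linarith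
  qed
  then show ?case using K by (intro exI[of _ "max K K'"]) auto
qed

lemma dense_weakly:
  fixes C :: "'a::real_normed_vector set"
  assumes "closure C = UNIV"
  shows "weakly_dense C"
  unfolding weakly_dense_def
proof (intro allI impI)
  fix x and F :: "('a \<Rightarrow> real) set" and e :: real
  assume e: "e > 0" and F: "finite F \<and> (\<forall>f\<in>F. bounded_linear f)"
  obtain K where K: "K > 0" "\<forall>f\<in>F. \<forall>u. \<bar>f u\<bar> \<le> norm u * K" using finite_bl_bound F by blast
  have "x \<in> closure C" using assms by simp
  then obtain s where s: "s \<in> C" "dist s x < e / K" using e K(1)
    by (meson closure_approachable divide_pos_pos)
  have "\<bar>f s - f x\<bar> < e" if f: "f \<in> F" for f
  proof -
    have "f s - f x = f (s - x)" using F f linear_diff bounded_linear.linear by metis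
    then have "\<bar>f s - f x\<bar> \<le> norm (s - x) * K" using K f by simp
    also have "\<dots> < e" using s(2) K(1) by (simp add: dist_norm pos_less_divide_eq)
    finally show ?thesis .
  qed
  then show "\<exists>s\<in>C. \<forall>f\<in>F. \<bar>f s - f x\<bar> < e" using s(1) by blast
qed

locale SS =
  fixes cplx :: bool and J :: "'a::{real_normed_algebra, comm_ring} \<Rightarrow> 'a"
  assumes ss: "scalar_structure cplx J"
begin

lemma J_bl: "bounded_linear J"
  using ss unfolding scalar_structure_def by (cases cplx) (auto simp: bounded_linear_zero)

lemma J_mult: "J (x*y) = J x * y"
  using ss unfolding scalar_structure_def by (cases cplx) auto

lemma scal_bl: "bounded_linear (scal J z)"
proof -
  have "scal J z = (\<lambda>x. Re z *\<^sub>R x + Im z *\<^sub>R J x)" by (auto simp: scal_def)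
  then show ?thesis
    by (simp add: J_bl bounded_linear_add bounded_linear_ident bounded_linear_scaleR_right bounded_linear_compose[of "scaleR (Im z)" J] bounded_linear_scaleR_right)
qed

lemma scal_add: "scal J z (u+v) = scal J z u + scal J z v"
  using linear_add[OF bounded_linear.linear[OF scal_bl]] by blast
lemma scal_diff: "scal J z (u-v) = scal J z u - scal J z v"
  using linear_diff[OF bounded_linear.linear[OF scal_bl]] by blast
lemma scal_scaleR: "scal J z (r *\<^sub>R u) = r *\<^sub>R scal J z u"
  using linear_scale[OF bounded_linear.linear[OF scal_bl]] by blast
lemma scal_zero: "scal J z 0 = 0"
  using linear_0[OF bounded_linear.linear[OF scal_bl]] by blast
lemma scal_addz: "scal J (z+w) u = scal J z u + scal J w u"
  by (simp add: scal_def algebra_simps)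
lemma scal_0z: "scal J 0 u = 0" by (simp add: scal_def)
lemma scal_1: "scal J 1 u = u" by (simp add: scal_def)
lemma scal_ofreal: "scal J (complex_of_real r * z) u = r *\<^sub>R scal J z u"
  by (simp add: scal_def algebra_simps)

lemma scal_mult_left: "scal J z u * v = scal J z (u * v)"
  by (simp add: scal_def algebra_simps J_mult)
lemma scal_mult_right: "v * scal J z u = scal J z (v * u)"
proof -
  have "v * scal J z u = scal J z u * v" by (rule mult.commute)
  also have "\<dots> = scal J z (u * v)" by (rule scal_mult_left)
  also have "u * v = v * u" by (rule mult.commute)
  finally show ?thesis .
qed

lemma real_scal: "\<not> cplx \<Longrightarrow> scal J z u = Re z *\<^sub>R u"
  using ss unfolding scalar_structure_def scal_def by simp

lemma scalars_Im: "\<not> cplx \<Longrightarrow> z \<in> scalars cplx \<Longrightarrow> Im z = 0"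
  by (simp add: scalars_def complex_is_Real_iff)

lemma scal_scal:
  assumes "z \<in> scalars cplx" "w \<in> scalars cplx"
  shows "scal J z (scal J w u) = scal J (z*w) u"
proof (cases cplx)
  case True
  then have JJ: "J (J x) = - x" for x using ss unfolding scalar_structure_def by auto
  have lJ: "linear J" using J_bl bounded_linear.linear by blast
  show ?thesis
    by (simp add: scal_def linear_add[OF lJ] linear_scale[OF lJ] JJ algebra_simps)
next
  case False
  then show ?thesis using assms scalars_Im[OF False] by (simp add: real_scal)
qed

lemma scal_norm:
  assumes "z \<in> scalars cplx"
  shows "norm (scal J z u) = cmod z * norm u"
proof (cases cplx)
  case True
  then show ?thesis using ss unfolding scalar_structure_def by auto
next
  case False
  then have "Im z = 0" using scalars_Im assms by blast
  then have "cmod z = \<bar>Re z\<bar>" by (simp add: cmod_def)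
  then show ?thesis using False by (simp add: real_scal)
qed

lemma scalars_add: "z \<in> scalars cplx \<Longrightarrow> w \<in> scalars cplx \<Longrightarrow> z + w \<in> scalars cplx"
  by (auto simp: scalars_def)
lemma scalars_mult: "z \<in> scalars cplx \<Longrightarrow> w \<in> scalars cplx \<Longrightarrow> z * w \<in> scalars cplx"
  by (auto simp: scalars_def)
lemma scalars_diff: "z \<in> scalars cplx \<Longrightarrow> w \<in> scalars cplx \<Longrightarrow> z - w \<in> scalars cplx"
  by (auto simp: scalars_def)
lemma scalars_ofreal: "complex_of_real r \<in> scalars cplx"
  by (auto simp: scalars_def)
lemma scalars_0: "0 \<in> scalars cplx" and scalars_1: "1 \<in> scalars cplx"
  by (auto simp: scalars_def)
lemma scalars_closed: "closed (scalars cplx)"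
  by (auto simp: scalars_def closed_complex_Reals)

lemma scal_comm:
  assumes "z \<in> scalars cplx" "w \<in> scalars cplx"
  shows "scal J z (scal J w u) = scal J w (scal J z u)"
  using scal_scal[OF assms] scal_scal[OF assms(2,1)] by (simp add: mult.commute)

end

lemma bl_ker_closed: "bounded_linear L \<Longrightarrow> closed {u. L u = 0}"
proof -
  assume L: "bounded_linear L"
  have "{u. L u = 0} = L -` {0}" by auto
  moreover have "closed (L -` {0})"
    by (rule continuous_closed_vimage) (auto intro: linear_continuous_at[OF L])
  ultimately show ?thesis by simp
qed

lemma bl_ker_subspace: "bounded_linear L \<Longrightarrow> subspace {u. L u = 0}"
proof -
  assume "bounded_linear L"
  then have L: "linear L" by (rule bounded_linear.linear)
  show ?thesis unfolding subspace_def
    by (simp add: linear_0[OF L] linear_add[OF L] linear_scale[OF L])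
qed

context SS
begin

lemma line_subspace: "subspace {scal J z x | z. z \<in> scalars cplx}"
  unfolding subspace_def
proof (intro conjI ballI allI)
  have "0 = scal J 0 x" by (simp add: scal_0z)
  then show "0 \<in> {scal J z x | z. z \<in> scalars cplx}" using scalars_0 by blast
next
  fix u v assume "u \<in> {scal J z x | z. z \<in> scalars cplx}" "v \<in> {scal J z x | z. z \<in> scalars cplx}"
  then obtain z w where "u = scal J z x" "v = scal J w x" "z \<in> scalars cplx" "w \<in> scalars cplx" by blast
  then have "u + v = scal J (z + w) x" "z + w \<in> scalars cplx" by (simp_all add: scal_addz scalars_add)
  then show "u + v \<in> {scal J z x | z. z \<in> scalars cplx}" by blast
next
  fix r and u assume "u \<in> {scal J z x | z. z \<in> scalars cplx}"
  then obtain z where "u = scal J z x" "z \<in> scalars cplx" by blast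
  then have "r *\<^sub>R u = scal J (complex_of_real r * z) x" "complex_of_real r * z \<in> scalars cplx"
    by (simp_all add: scal_ofreal scalars_mult scalars_ofreal)
  then show "r *\<^sub>R u \<in> {scal J z x | z. z \<in> scalars cplx}" by blast
qed

lemma scal_diffz: "scal J z u - scal J w u = scal J (z - w) u"
  by (simp add: scal_def algebra_simps)

lemma line_closed: "closed {scal J z x | z. z \<in> scalars cplx}"
proof (cases "x = 0")
  case True
  have "{scal J z x | z. z \<in> scalars cplx} = {0}"
    using True scal_zero scalars_0 by auto
  then show ?thesis by simp
next
  case xnz: False
  show ?thesis
  unfolding closed_sequential_limits
  proof (intro allI impI, elim conjE)
    fix s l assume sL: "\<forall>n. s n \<in> {scal J z x | z. z \<in> scalars cplx}" and lim: "s \<longlonglongrightarrow> l"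
    then have "\<forall>n. \<exists>z. z \<in> scalars cplx \<and> s n = scal J z x" by blast
    then obtain z where z: "\<And>n. z n \<in> scalars cplx" "\<And>n. s n = scal J (z n) x" by metis
    have nx: "norm x > 0" using xnz by simp
    have dz: "dist (z m) (z n) = dist (s m) (s n) / norm x" for m n
    proof -
      have "dist (s m) (s n) = norm (scal J (z m - z n) x)"
        by (simp add: dist_norm z(2) scal_diffz)
      also have "\<dots> = cmod (z m - z n) * norm x"
        using scal_norm scalars_diff z(1) by blast
      finally show ?thesis using nx by (simp add: dist_norm)
    qed
    have "Cauchy s" using lim LIMSEQ_imp_Cauchy by blast
    have "Cauchy z"
    proof (rule metric_CauchyI)
      fix e :: real assume e: "e > 0"
      then obtain N where N: "\<forall>m\<ge>N. \<forall>n\<ge>N. dist (s m) (s n) < e * norm x"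
        using \<open>Cauchy s\<close> nx unfolding Cauchy_def by (meson mult_pos_pos)
      show "\<exists>M. \<forall>m\<ge>M. \<forall>n\<ge>M. dist (z m) (z n) < e"
      proof (intro exI allI impI)
        fix m n assume "m \<ge> N" "n \<ge> N"
        then have "dist (s m) (s n) < e * norm x" using N by blast
        then show "dist (z m) (z n) < e" using dz nx by (simp add: divide_less_eq)
      qed
    qed
    then obtain \<zeta> where zl: "z \<longlonglongrightarrow> \<zeta>" using Cauchy_convergent_iff convergent_def by blast
    have zs: "\<zeta> \<in> scalars cplx"
      using scalars_closed zl z(1) closed_sequentially by blast
    have "(\<lambda>n. norm (s n - scal J \<zeta> x)) \<longlonglongrightarrow> 0"
    proof -
      have eq: "norm (s n - scal J \<zeta> x) = cmod (z n - \<zeta>) * norm x" for n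
        using z(2) scal_diffz scal_norm scalars_diff z(1) zs by metis
      have "(\<lambda>n. cmod (z n - \<zeta>)) \<longlonglongrightarrow> 0"
        using tendsto_norm_zero[OF LIM_zero[OF zl]] by simp
      then have "(\<lambda>n. cmod (z n - \<zeta>) * norm x) \<longlonglongrightarrow> 0"
        using tendsto_mult[OF _ tendsto_const[of "norm x"]] by fastforce
      then show ?thesis unfolding eq by simp
    qed
    then have "s \<longlonglongrightarrow> scal J \<zeta> x" using tendsto_norm_zero_iff LIM_zero_cancel by blast
    then have "l = scal J \<zeta> x" using lim LIMSEQ_unique by blast
    then show "l \<in> {scal J z x | z. z \<in> scalars cplx}" using zs by blast
  qed
qed

end

lemma main_not_ws:
  fixes a :: "'a::{real_normed_algebra, comm_ring}"
    and cplx :: bool and J :: "'a \<Rightarrow> 'a" and M :: "'a \<Rightarrow> 'a" and c :: complex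
  assumes ss: "scalar_structure cplx J"
    and nd: "non_degenerate TYPE('a)"
    and der: "derivation cplx J M"
    and Ma: "M a \<noteq> 0"
    and c: "c \<in> scalars cplx"
  shows "\<not> weakly_supercyclic cplx J (\<lambda>x. scal J c x + a * x)"
proof
  interpret SS cplx J by (rule SS.intro[OF ss])
  define T where "T = (\<lambda>x. scal J c x + a * x)"
  define b where "b = M a"
  assume "weakly_supercyclic cplx J (\<lambda>x. scal J c x + a * x)"
  then obtain x where wd: "weakly_dense (orbit_cone cplx J T x)"
    unfolding weakly_supercyclic_def T_def by blast
  define C where "C = orbit_cone cplx J T x"
  have wdC: "weakly_dense C" using wd C_def by simp
  have Cmem: "\<exists>z n. z \<in> scalars cplx \<and> u = scal J z ((T ^^ n) x)" if "u \<in> C" for u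
    using that unfolding C_def orbit_cone_def by blast
  have nd': "u = 0" if "\<And>v. u * v = 0" for u :: 'a
    using nd that unfolding non_degenerate_def by blast
  have M_bl: "bounded_linear M" and Mscal: "\<And>z u. z \<in> scalars cplx \<Longrightarrow> M (scal J z u) = scal J z (M u)"
    and Mmult: "\<And>u v. M (u * v) = M u * v + u * M v"
    using der unfolding derivation_def lin_op_def by auto
  have M_lin: "linear M" using M_bl bounded_linear.linear by blast
  have T_bl: "bounded_linear T"
    unfolding T_def by (intro bounded_linear_add scal_bl bounded_linear_mult_right)
  have T_lin: "linear T" using T_bl bounded_linear.linear by blast
  have T_ml: "T u * v = T (u * v)" for u v
    unfolding T_def by (simp add: distrib_right scal_mult_left mult.assoc)
  have T_mr: "v * T u = T (v * u)" for u v
  proof -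
    have "v * T u = T u * v" by (rule mult.commute)
    also have "\<dots> = T (u * v)" by (rule T_ml)
    also have "u * v = v * u" by (rule mult.commute)
    finally show ?thesis .
  qed
  have T_scal: "T (scal J z u) = scal J z (T u)" if z: "z \<in> scalars cplx" for z u
  proof -
    have "T (scal J z u) = scal J c (scal J z u) + a * scal J z u" unfolding T_def by simp
    also have "\<dots> = scal J z (scal J c u) + scal J z (a * u)"
      using scal_comm[OF c z] scal_mult_right by simp
    also have "\<dots> = scal J z (T u)" unfolding T_def by (simp add: scal_add)
    finally show ?thesis .
  qed
  have MT: "M (T u) = T (M u) + b * u" for u
  proof -
    have "M (T u) = M (scal J c u) + M (a * u)" unfolding T_def using linear_add[OF M_lin] by simp
    also have "\<dots> = scal J c (M u) + (M a * u + a * M u)" using Mscal[OF c] Mmult by simp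
    also have "\<dots> = T (M u) + b * u" unfolding T_def b_def by (simp add: algebra_simps)
    finally show ?thesis .
  qed
  have Tn_mr: "v * (T ^^ n) u = (T ^^ n) (v * u)" for n u v
    by (induction n arbitrary: u) (simp_all add: T_mr)
  have Tn_scal: "(T ^^ n) (scal J z u) = scal J z ((T ^^ n) u)" if z: "z \<in> scalars cplx" for n z u
    by (induction n arbitrary: u) (simp_all add: T_scal[OF z])
  have Tn_0: "(T ^^ n) 0 = 0" for n
    by (induction n) (simp_all add: linear_0[OF T_lin])
  define E where "E u = u * M x - x * M u" for u
  have E_lin: "bounded_linear E"
  proof -
    have "E = (\<lambda>u. u * M x - x * M u)" unfolding E_def by auto
    then show ?thesis
      by (simp add: bounded_linear_sub bounded_linear_mult_left bounded_linear_compose[OF bounded_linear_mult_right M_bl])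
  qed
  have ET: "E (T w) = T (E w) - b * x * w" for w
  proof -
    have "E (T w) = T w * M x - x * M (T w)" unfolding E_def ..
    also have "\<dots> = T (w * M x) - x * (T (M w) + b * w)" by (simp only: MT T_ml)
    also have "\<dots> = T (w * M x) - (x * T (M w) + x * (b * w))" by (simp only: distrib_left)
    also have "\<dots> = T (w * M x) - (T (x * M w) + b * x * w)" by (simp only: T_mr mult.left_commute[of x b] mult.assoc)
    also have "\<dots> = T (w * M x) - T (x * M w) - b * x * w" by (simp only: diff_diff_eq)
    also have "\<dots> = T (E w) - b * x * w" unfolding E_def using linear_diff[OF T_lin] by simp
    finally show ?thesis .
  qed
  have ident: "T (E ((T ^^ n) x)) = - (real n *\<^sub>R (b * x * (T ^^ n) x))" for n
  proof (induction n)
    case 0 then show ?case unfolding E_def by (simp add: linear_0[OF T_lin])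
  next
    case (Suc n)
    let ?w = "(T ^^ n) x"
    have "T (E ((T ^^ Suc n) x)) = T (T (E ?w) - b * x * ?w)" using ET by simp
    also have "\<dots> = T (T (E ?w)) - T (b * x * ?w)" using linear_diff[OF T_lin] by simp
    also have "\<dots> = T (- (real n *\<^sub>R (b * x * ?w))) - b * x * T ?w" using Suc T_mr[of "b * x" ?w] by simp
    also have "\<dots> = - (real n *\<^sub>R (b * x * T ?w)) - b * x * T ?w"
      using linear_neg[OF T_lin] linear_scale[OF T_lin] T_mr[of "b * x" ?w] by simp
    also have "\<dots> = - (real (Suc n) *\<^sub>R (b * x * (T ^^ Suc n) x))" by (simp add: algebra_simps)
    finally show ?case .
  qed
  have identC: "\<exists>n. T (E u) = - (real n *\<^sub>R (b * x * u))" if u: "u \<in> C" for u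
  proof -
    obtain z n where z: "z \<in> scalars cplx" and uz: "u = scal J z ((T ^^ n) x)" using Cmem[OF u] by blast
    have "E u = scal J z (E ((T ^^ n) x))"
      unfolding E_def uz using Mscal[OF z] scal_mult_left scal_mult_right scal_diff by simp
    then have "T (E u) = scal J z (T (E ((T ^^ n) x)))" using T_scal[OF z] by simp
    also have "\<dots> = - (real n *\<^sub>R scal J z (b * x * (T ^^ n) x))"
      using ident scal_scaleR linear_neg[OF bounded_linear.linear[OF scal_bl]] by simp
    also have "scal J z (b * x * (T ^^ n) x) = b * x * u" unfolding uz using scal_mult_right by simp
    finally show ?thesis by blast
  qed
  have BC: "w * u = scal J z ((T ^^ n) (w * x))" if "u = scal J z ((T ^^ n) x)" for w u z n
    using that scal_mult_right Tn_mr by simp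
  have bx: "b * x \<noteq> 0"
  proof
    assume bx0: "b * x = 0"
    have "{u. b * u = 0} = UNIV"
    proof (rule wd_one[OF wdC])
      show "C \<subseteq> {u. b * u = 0}"
      proof
        fix u assume "u \<in> C"
        then obtain z n where "z \<in> scalars cplx" "u = scal J z ((T ^^ n) x)" using Cmem by blast
        then show "u \<in> {u. b * u = 0}" using BC[of u z n b] bx0 Tn_0 scal_zero by simp
      qed
      show "subspace {u. b * u = 0}" by (rule bl_ker_subspace[OF bounded_linear_mult_right])
      show "closed {u. b * u = 0}" by (rule bl_ker_closed[OF bounded_linear_mult_right])
    qed
    then have "b = 0" using nd' by blast
    then show False using Ma b_def by simp
  qed
  have bxx: "b * x * x \<noteq> 0"
  proof
    assume bxx0: "b * x * x = 0"
    have "{u. b * x * u = 0} = UNIV"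
    proof (rule wd_one[OF wdC])
      show "C \<subseteq> {u. b * x * u = 0}"
      proof
        fix u assume "u \<in> C"
        then obtain z n where "z \<in> scalars cplx" "u = scal J z ((T ^^ n) x)" using Cmem by blast
        then show "u \<in> {u. b * x * u = 0}" using BC[of u z n "b * x"] bxx0 Tn_0 scal_zero by simp
      qed
      show "subspace {u. b * x * u = 0}" by (rule bl_ker_subspace[OF bounded_linear_mult_right])
      show "closed {u. b * x * u = 0}" by (rule bl_ker_closed[OF bounded_linear_mult_right])
    qed
    then have "b * x = 0" using nd' by blast
    then show False using bx by simp
  qed
  have Tbxx: "T (b * x * x) \<noteq> 0"
  proof
    assume t0: "T (b * x * x) = 0"
    define L where "L = {scal J z x | z. z \<in> scalars cplx}"
    have "{u. b * x * u = 0} = UNIV \<or> L = UNIV"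
    proof (rule wd_two[OF wdC])
      show "C \<subseteq> {u. b * x * u = 0} \<union> L"
      proof
        fix u assume "u \<in> C"
        then obtain z n where z: "z \<in> scalars cplx" and uz: "u = scal J z ((T ^^ n) x)" using Cmem by blast
        show "u \<in> {u. b * x * u = 0} \<union> L"
        proof (cases n)
          case 0 then show ?thesis using uz z unfolding L_def by auto
        next
          case (Suc m)
          have "b * x * u = scal J z ((T ^^ n) (b * x * x))" using BC[OF uz] .
          also have "(T ^^ n) (b * x * x) = (T ^^ m) (T (b * x * x))"
            unfolding Suc funpow_Suc_right by simp
          also have "\<dots> = 0" using t0 Tn_0 by simp
          finally show ?thesis using scal_zero by simp
        qed
      qed
      show "subspace {u. b * x * u = 0}" by (rule bl_ker_subspace[OF bounded_linear_mult_right])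
      show "closed {u. b * x * u = 0}" by (rule bl_ker_closed[OF bounded_linear_mult_right])
      show "subspace L" unfolding L_def by (rule line_subspace)
      show "closed L" unfolding L_def by (rule line_closed)
    qed
    then show False
    proof
      assume "{u. b * x * u = 0} = UNIV"
      then have "b * x = 0" using nd' by blast
      then show False using bx by simp
    next
      assume LU: "L = UNIV"
      have all: "\<exists>\<eta>. \<eta> \<in> scalars cplx \<and> w = scal J \<eta> x" for w
      proof -
        have "w \<in> L" using LU by simp
        then show ?thesis unfolding L_def by blast
      qed
      obtain \<alpha> where al: "\<alpha> \<in> scalars cplx" "a = scal J \<alpha> x" using all by blast
      obtain la0 where la: "la0 \<in> scalars cplx" "x * x = scal J la0 x" using all by blast
      obtain \<mu> where mu: "\<mu> \<in> scalars cplx" "M x = scal J \<mu> x" using all by blast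
      have xnz: "x \<noteq> 0"
      proof
        assume "x = 0"
        then have "a = 0" using al scal_zero by simp
        then show False using Ma linear_0[OF M_lin] by simp
      qed
      have eq1: "M (x * x) = scal J (la0 * \<mu>) x"
        using la Mscal[OF la(1)] mu scal_scal[OF la(1) mu(1)] by simp
      have "M (x * x) = M x * x + x * M x" by (rule Mmult)
      also have "\<dots> = scal J \<mu> (x * x) + scal J \<mu> (x * x)"
        using mu(2) scal_mult_left scal_mult_right by simp
      also have "\<dots> = 2 *\<^sub>R scal J (la0 * \<mu>) x"
        using la(2) scal_scal[OF mu(1) la(1)] by (simp add: mult.commute scaleR_2)
      finally have "scal J (la0 * \<mu>) x = 2 *\<^sub>R scal J (la0 * \<mu>) x" using eq1 by simp
      then have "scal J (la0 * \<mu>) x = 0" by (simp add: scaleR_2)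
      then have "cmod (la0 * \<mu>) * norm x = 0"
        using scal_norm[OF scalars_mult[OF la(1) mu(1)], of x] by simp
      then have "la0 = 0 \<or> \<mu> = 0" using xnz by simp
      then show False
      proof
        assume "la0 = 0"
        then have xx: "x * x = 0" using la(2) scal_0z by simp
        have "x * v = 0" for v
        proof -
          obtain \<eta> where "v = scal J \<eta> x" using all by blast
          then show ?thesis using scal_mult_right[of x \<eta> x] xx scal_zero by simp
        qed
        then show False using nd' xnz by blast
      next
        assume "\<mu> = 0"
        then have "M x = 0" using mu(2) scal_0z by simp
        then have "M a = 0" using al Mscal[OF al(1)] scal_zero by simp
        then show False using Ma by simp
      qed
    qed
  qed
  define P where "P = b * x * x"
  define Q where "Q = b * x * T x"
  have QT: "Q = T P" unfolding P_def Q_def using T_mr[of "b * x" x] by simp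
  have Pnz: "P \<noteq> 0" using bxx P_def by simp
  have Qnz: "Q \<noteq> 0" using Tbxx QT P_def by simp
  obtain f1 :: "'a \<Rightarrow> real" where f1: "bounded_linear f1" "f1 P \<noteq> 0"
    using separation[OF subspace_single_0 closed_singleton, of P] Pnz by auto
  obtain f2 :: "'a \<Rightarrow> real" where f2: "bounded_linear f2" "f2 Q \<noteq> 0"
    using separation[OF subspace_single_0 closed_singleton, of Q] Qnz by auto
  have "\<exists>g::'a\<Rightarrow>real. bounded_linear g \<and> g P \<noteq> 0 \<and> g Q \<noteq> 0"
  proof (cases "f1 Q = 0")
    case False then show ?thesis using f1 by blast
  next
    case f1Q: True
    show ?thesis
    proof (cases "f2 P = 0")
      case False then show ?thesis using f2 by blast
    next
      case True
      have "bounded_linear (\<lambda>u. f1 u + f2 u)" using f1(1) f2(1) by (rule bounded_linear_add)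
      moreover have "f1 P + f2 P \<noteq> 0" "f1 Q + f2 Q \<noteq> 0" using True f1Q f1 f2 by simp_all
      ultimately show ?thesis by blast
    qed
  qed
  then obtain g :: "'a \<Rightarrow> real" where g: "bounded_linear g" "g P \<noteq> 0" "g Q \<noteq> 0" by blast
  have g_lin: "linear g" using g(1) bounded_linear.linear by blast
  define gA where "gA u = g (T (E u))" for u
  define gB where "gB u = g (b * x * u)" for u
  have gA_bl: "bounded_linear gA"
  proof -
    have "gA = g \<circ> T \<circ> E" unfolding gA_def by auto
    have "bounded_linear (\<lambda>u. g (T (E u)))"
      using bounded_linear_compose[OF g(1) bounded_linear_compose[OF T_bl E_lin]] by simp
    then show ?thesis unfolding gA_def .
  qed
  have gB_bl: "bounded_linear gB"
  proof -
    have "gB = g \<circ> (\<lambda>u. b * x * u)" unfolding gB_def by auto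
    have "bounded_linear (\<lambda>u. g (b * x * u))"
      using bounded_linear_compose[OF g(1) bounded_linear_mult_right[of "b * x"]] by simp
    then show ?thesis unfolding gB_def .
  qed
  have gA_lin: "linear gA" and gB_lin: "linear gB"
    using gA_bl gB_bl bounded_linear.linear by blast+
  have gAC: "\<exists>n. gA u = - (real n * gB u)" if uC: "u \<in> C" for u
  proof -
    obtain n where "T (E u) = - (real n *\<^sub>R (b * x * u))" using identC[OF uC] by blast
    then have "gA u = - (real n * gB u)"
      unfolding gA_def gB_def using linear_neg[OF g_lin] linear_scale[OF g_lin] by simp
    then show ?thesis by blast
  qed
  have gAx: "gA x = 0" using ident[of 0] unfolding gA_def using linear_0[OF g_lin] by simp
  have gATx: "gA (T x) = - g Q" using ident[of 1] unfolding gA_def Q_def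
    using linear_neg[OF g_lin] by simp
  have gBx: "gB x = g P" unfolding gB_def P_def by simp
  have gBTx: "gB (T x) = g Q" unfolding gB_def Q_def by simp
  define s0 where "s0 = g P / g Q"
  define y where "y = x + s0 *\<^sub>R T x"
  have gAy: "gA y = - g P"
    unfolding y_def using linear_add[OF gA_lin] linear_scale[OF gA_lin] gAx gATx g(3)
    by (simp add: s0_def)
  have gBy: "gB y = 2 * g P"
    unfolding y_def using linear_add[OF gB_lin] linear_scale[OF gB_lin] gBx gBTx g(3)
    by (simp add: s0_def)
  define \<beta> where "\<beta> = g P"
  have \<beta>: "\<beta> \<noteq> 0" using g(2) \<beta>_def by simp
  define e where "e = \<bar>\<beta>\<bar> / 2"
  have e: "e > 0" using \<beta> e_def by simp
  have Ff: "finite {gA, gB} \<and> (\<forall>f\<in>{gA, gB}. bounded_linear f)" using gA_bl gB_bl by simp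
  have "\<exists>s\<in>C. \<forall>f\<in>{gA, gB}. \<bar>f s - f y\<bar> < e"
    using wdC e Ff unfolding weakly_dense_def by blast
  then obtain u where u: "u \<in> C" "\<bar>gA u - gA y\<bar> < e" "\<bar>gB u - gB y\<bar> < e" by blast
  obtain n where n: "gA u = - (real n * gB u)" using gAC[OF u(1)] by blast
  have h1: "\<bar>gA u + \<beta>\<bar> < \<bar>\<beta>\<bar> / 2" using u(2) gAy \<beta>_def e_def by simp
  have h2: "\<bar>gB u - 2 * \<beta>\<bar> < \<bar>\<beta>\<bar> / 2" using u(3) gBy \<beta>_def e_def by simp
  have A1: "\<bar>gA u\<bar> < 3 / 2 * \<bar>\<beta>\<bar>" "\<bar>gA u\<bar> > \<bar>\<beta>\<bar> / 2" using h1 by (auto simp: abs_if split: if_splits)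
  have B1: "\<bar>gB u\<bar> > 3 / 2 * \<bar>\<beta>\<bar>" using h2 by (auto simp: abs_if split: if_splits)
  show False
  proof (cases "n = 0")
    case True
    then show False using n A1 by simp
  next
    case False
    then have "real n \<ge> 1" by simp
    have "\<bar>gA u\<bar> = real n * \<bar>gB u\<bar>" using n by (simp add: abs_mult)
    also have "\<dots> \<ge> 1 * \<bar>gB u\<bar>" using \<open>real n \<ge> 1\<close> by (intro mult_right_mono) auto
    finally show False using A1 B1 by simp
  qed
qed

theorem proposition3p4:
  fixes a :: "'a::{real_normed_algebra, comm_ring, banach}"
    and cplx :: bool and J :: "'a \<Rightarrow> 'a" and M :: "'a \<Rightarrow> 'a"
  assumes "scalar_structure cplx J"
    and "non_degenerate TYPE('a)"
    and "derivation cplx J M"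
    and "M a \<noteq> 0"
  shows "(\<forall>c\<in>scalars cplx. \<not> supercyclic cplx J (\<lambda>x. scal J c x + a * x))
    \<and> (\<forall>(R::'a \<Rightarrow> 'a) (Y::'a set) (nY::'a \<Rightarrow> real).
         lin_op cplx J R \<and> closure (range R) = UNIV \<and> (\<forall>x. R (a * x) = a * R x)
         \<and> embedded_banach cplx J Y nY \<and> in_class_Y Y nY \<and> range R \<subseteq> Y
         \<longrightarrow> (\<forall>c\<in>scalars cplx. \<not> weakly_supercyclic cplx J (\<lambda>x. scal J c x + a * x)))"
proof -
  have ws: "\<not> weakly_supercyclic cplx J (\<lambda>x. scal J c x + a * x)" if c: "c \<in> scalars cplx" for c
    using main_not_ws[OF assms c] .
  have sc: "\<not> supercyclic cplx J (\<lambda>x. scal J c x + a * x)" if c: "c \<in> scalars cplx" for c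
  proof
    assume "supercyclic cplx J (\<lambda>x. scal J c x + a * x)"
    then obtain x where "closure (orbit_cone cplx J (\<lambda>x. scal J c x + a * x) x) = UNIV"
      unfolding supercyclic_def by blast
    then have "weakly_dense (orbit_cone cplx J (\<lambda>x. scal J c x + a * x) x)" by (rule dense_weakly)
    then have "weakly_supercyclic cplx J (\<lambda>x. scal J c x + a * x)"
      unfolding weakly_supercyclic_def by blast
    then show False using ws[OF c] by blast
  qed
  show ?thesis using ws sc by blast
qed

end
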